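(* For all $D,E\in\mathcal{C}^\uparrow$: (i) $\mathcal{S}(\mathcal{S}(D))=D$; (ii) $d_1(\mathcal{S}(D),\mathcal{S}(E))=d_1(D,E)$; (iii) $\|\mathcal{S}(D)\|_{\partial_2,1}=\|D\|_{\partial_2,1}$.
   Context: $\mathcal{C}^\uparrow$ is the class of SI bivariate copulas ($C(v,\cdot)$ concave for every $v$). $\partial_2$ is the partial derivative in the second argument. For $C\in\mathcal{C}^\uparrow$: $\partial_2^+C(v,t):=\lim_{s\downarrow t}\partial_2C(v,s)$, for decreasing right-continuous $f$, $f^{-1}(w):=\inf\{t\in[0,1]:f(t)\le w\}$, and $\mathcal{S}(C)(v,u):=\int_0^u(\partial_2^+C(v,\cdot))^{-1}(t)\,dt$ (which is again an SI copula). For $p\ge1$, $\|C\|_{\partial_2,p}:=\left(\int_0^1\int_0^1|\partial_2C(u,v)|^p\,du\,dv\right)^{1/p}$ and $d_p(D,E):=\|D-E\|_{\partial_2,p}$. *)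

theory Defs
  imports "HOL-Analysis.Analysis"
begin

definition copula :: "(real \<Rightarrow> real \<Rightarrow> real) \<Rightarrow> bool" where
  "copula C \<longleftrightarrow>
     (\<forall>u\<in>{0..1}. C u 0 = 0 \<and> C 0 u = 0 \<and> C u 1 = u \<and> C 1 u = u) \<and>
     (\<forall>u1 u2 v1 v2. 0 \<le> u1 \<and> u1 \<le> u2 \<and> u2 \<le> 1 \<and> 0 \<le> v1 \<and> v1 \<le> v2 \<and> v2 \<le> 1 \<longrightarrow>
        C u2 v2 - C u2 v1 - C u1 v2 + C u1 v1 \<ge> 0)"

definition SI_copula :: "(real \<Rightarrow> real \<Rightarrow> real) \<Rightarrow> bool" where
  "SI_copula C \<longleftrightarrow> copula C \<and> (\<forall>v\<in>{0..1}. concave_on {0..1} (\<lambda>t. C v t))"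

text \<open>Partial derivative in the second argument (meaningful where it exists, i.e. a.e.).\<close>
definition partial2 :: "(real \<Rightarrow> real \<Rightarrow> real) \<Rightarrow> real \<Rightarrow> real \<Rightarrow> real" where
  "partial2 C v t = deriv (\<lambda>s. C v s) t"

definition partial2_plus :: "(real \<Rightarrow> real \<Rightarrow> real) \<Rightarrow> real \<Rightarrow> real \<Rightarrow> real" where
  "partial2_plus C v t =
     Lim (at t within {s. t < s \<and> (\<lambda>x. C v x) differentiable (at s)}) (\<lambda>s. partial2 C v s)"

text \<open>Generalized inverse of a decreasing function on [0,1]: inf {t in [0,1]. f t <= w},
  with the convention inf of the empty set = 1.\<close>
definition gen_inv :: "(real \<Rightarrow> real) \<Rightarrow> real \<Rightarrow> real" where
  "gen_inv f w = Inf ({t\<in>{0..1}. f t \<le> w} \<union> {1})"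

definition S_op :: "(real \<Rightarrow> real \<Rightarrow> real) \<Rightarrow> real \<Rightarrow> real \<Rightarrow> real" where
  "S_op C v u = integral {0..u} (\<lambda>t. gen_inv (partial2_plus C v) t)"

definition norm_d2 :: "real \<Rightarrow> (real \<Rightarrow> real \<Rightarrow> real) \<Rightarrow> real" where
  "norm_d2 p C =
     enn2real (\<integral>\<^sup>+ x. indicator ({0..1} \<times> {0..1}) x *
                  ennreal (\<bar>partial2 C (fst x) (snd x)\<bar> powr p) \<partial>lborel) powr (1 / p)"

definition dist_d2 :: "real \<Rightarrow> (real \<Rightarrow> real \<Rightarrow> real) \<Rightarrow> (real \<Rightarrow> real \<Rightarrow> real) \<Rightarrow> real" where
  "dist_d2 p D E = norm_d2 p (\<lambda>u v. D u v - E u v)"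

end

theory Submission
  imports Defs
begin

definition SLOPE :: "(real\<Rightarrow>real) \<Rightarrow> (real\<Rightarrow>real) \<Rightarrow> bool" where
  "SLOPE F g \<longleftrightarrow> (\<forall>x y. 0 \<le> x \<longrightarrow> x < y \<longrightarrow> y \<le> 1 \<longrightarrow>
      (y - x) * g y \<le> F y - F x \<and> F y - F x \<le> (y - x) * g x)"

definition DRC :: "(real\<Rightarrow>real) \<Rightarrow> bool" where
  "DRC g \<longleftrightarrow> (\<forall>x y. 0 \<le> x \<longrightarrow> x \<le> y \<longrightarrow> y \<le> 1 \<longrightarrow> g y \<le> g x)
     \<and> (\<forall>t. 0 \<le> t \<longrightarrow> t < 1 \<longrightarrow> (g \<longlongrightarrow> g t) (at_right t))
     \<and> (\<forall>t. 0 \<le> t \<longrightarrow> t \<le> 1 \<longrightarrow> 0 \<le> g t \<and> g t \<le> 1)"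

lemma SLOPE_D:
  assumes "SLOPE F g" "0 \<le> x" "x < y" "y \<le> 1"
  shows "(y - x) * g y \<le> F y - F x" "F y - F x \<le> (y - x) * g x"
  using assms unfolding SLOPE_def by blast+

lemma DRC_mono: "DRC g \<Longrightarrow> 0 \<le> x \<Longrightarrow> x \<le> y \<Longrightarrow> y \<le> 1 \<Longrightarrow> g y \<le> g x"
  unfolding DRC_def by blast
lemma DRC_rc: "DRC g \<Longrightarrow> 0 \<le> t \<Longrightarrow> t < 1 \<Longrightarrow> (g \<longlongrightarrow> g t) (at_right t)"
  unfolding DRC_def by blast
lemma DRC_bnd: "DRC g \<Longrightarrow> 0 \<le> t \<Longrightarrow> t \<le> 1 \<Longrightarrow> 0 \<le> g t \<and> g t \<le> 1"
  unfolding DRC_def by blast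

lemma SLOPE_DIFF:
  assumes S: "SLOPE F g" and s: "0 < s" "s < 1" and c: "isCont g s"
  shows "(F has_real_derivative g s) (at s)"
proof -
  have "((\<lambda>h. (F (s + h) - F s) / h) \<longlongrightarrow> g s) (at 0)"
  proof (rule LIM_I)
    fix r :: real assume r: "0 < r"
    from c r obtain d0 where d0: "d0 > 0" "\<And>x. \<bar>x - s\<bar> < d0 \<Longrightarrow> \<bar>g x - g s\<bar> < r"
    proof -
      from c r obtain d1 where "d1 > 0" "\<And>x. x \<noteq> s \<and> \<bar>x - s\<bar> < d1 \<Longrightarrow> \<bar>g x - g s\<bar> < r"
        unfolding isCont_def LIM_eq by (auto simp: dist_real_def)
      then show ?thesis using that[of d1] r by (metis abs_zero diff_self)
    qed
    define d where "d = min d0 (min s (1 - s))"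
    have d: "d > 0" using d0 s by (simp add: d_def)
    show "\<exists>d>0. \<forall>h. h \<noteq> 0 \<and> norm (h - 0) < d \<longrightarrow> norm ((F (s + h) - F s) / h - g s) < r"
    proof (intro exI[of _ d] conjI allI impI d)
      fix h :: real assume h: "h \<noteq> 0 \<and> norm (h - 0) < d"
      have gh: "\<bar>g (s + h) - g s\<bar> < r" using d0(2)[of "s+h"] h by (auto simp: d_def)
      show "norm ((F (s + h) - F s) / h - g s) < r"
      proof (cases "h > 0")
        case True
        have "s + h \<le> 1" using h True by (auto simp: d_def)
        from SLOPE_D[OF S, of s "s+h"] this True s
        have "h * g (s+h) \<le> F (s+h) - F s" "F (s+h) - F s \<le> h * g s" by auto
        then have "g (s+h) \<le> (F (s + h) - F s) / h" "(F (s + h) - F s) / h \<le> g s"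
          using True by (auto simp: field_simps)
        then show ?thesis using gh by auto
      next
        case False
        then have hn: "h < 0" using h by auto
        have "0 \<le> s + h" using h hn by (auto simp: d_def)
        from SLOPE_D[OF S, of "s+h" s] this hn s
        have "(-h) * g s \<le> F s - F (s+h)" "F s - F (s+h) \<le> (-h) * g (s+h)" by auto
        then have "g s \<le> (F (s + h) - F s) / h" "(F (s + h) - F s) / h \<le> g (s+h)"
          using hn by (auto simp: field_simps)
        then show ?thesis using gh by auto
      qed
    qed
  qed
  then show ?thesis by (simp add: DERIV_def)
qed

lemma SLOPE_deriv_eq:
  assumes S: "SLOPE F g" and s: "0 < s" "s < 1" and D: "(F has_real_derivative D) (at s)"
  shows "D = g s"
proof -
  have L: "((\<lambda>h. (F (s + h) - F s) / h) \<longlongrightarrow> D) (at 0)" using D by (simp add: DERIV_def)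
  have R: "((\<lambda>h. (F (s + h) - F s) / h) \<longlongrightarrow> D) (at_right 0)"
    using L by (rule filterlim_mono) (simp_all add: at_le)
  have Lf: "((\<lambda>h. (F (s + h) - F s) / h) \<longlongrightarrow> D) (at_left 0)"
    using L by (rule filterlim_mono) (simp_all add: at_le)
  have "eventually (\<lambda>h. (F (s + h) - F s) / h \<le> g s) (at_right 0)"
  proof -
    have "eventually (\<lambda>h. h \<in> {0<..<1 - s}) (at_right 0)" using eventually_at_right_real[of 0 "1 - s"] s by auto
    then show ?thesis
  proof (elim eventually_mono)
    fix h assume "h \<in> {0<..<1 - s}"
    then have h: "0 < h" "s + h \<le> 1" by auto
    from SLOPE_D(2)[OF S, of s "s+h"] h s have "F (s+h) - F s \<le> h * g s" by auto
    then show "(F (s + h) - F s) / h \<le> g s" using h by (simp add: field_simps)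
  qed
  qed
  then have 1: "D \<le> g s" using R by (intro tendsto_upperbound) auto
  have "eventually (\<lambda>h. g s \<le> (F (s + h) - F s) / h) (at_left 0)"
  proof -
    have "eventually (\<lambda>h. h \<in> {-s<..<0}) (at_left 0)" using eventually_at_left_real[of "-s" 0] s by auto
    then show ?thesis
  proof (elim eventually_mono)
    fix h assume "h \<in> {-s<..<0}"
    then have h: "h < 0" "0 \<le> s + h" by auto
    from SLOPE_D(1)[OF S, of "s+h" s] h s have "(-h) * g s \<le> F s - F (s+h)" by auto
    then show "g s \<le> (F (s + h) - F s) / h" using h by (simp add: field_simps)
  qed
  qed
  then have 2: "g s \<le> D" using Lf by (intro tendsto_lowerbound) auto
  show ?thesis using 1 2 by auto
qed

lemma DRC_countable_discont:
  assumes "DRC g"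
  shows "countable {a\<in>{0<..<1}. \<not> isCont g a}"
proof -
  have "mono_on {0<..<1} (\<lambda>x. - g x)"
    using DRC_mono[OF assms] by (auto simp: mono_on_def)
  from mono_on_ctble_discont_open[OF _ this] have "countable {a\<in>{0<..<1::real}. \<not> isCont (\<lambda>x. - g x) a}" by simp
  moreover have "isCont (\<lambda>x. - g x) a \<longleftrightarrow> isCont g a" for a
    using isCont_minus[of a "\<lambda>x. - g x"] isCont_minus[of a g] by auto
  ultimately show ?thesis by simp
qed

lemma DRC_exists_cont:
  assumes "DRC g" "a < b" "0 \<le> a" "b \<le> 1"
  shows "\<exists>x. a < x \<and> x < b \<and> isCont g x"
proof -
  from open_minus_countable[OF DRC_countable_discont[OF assms(1)], of "{a<..<b}"] assms(2)
  obtain x where "x \<in> {a<..<b}" "x \<notin> {a\<in>{0<..<1}. \<not> isCont g a}" by auto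
  then show ?thesis using assms by auto
qed

lemma SLOPE_PP:
  assumes S: "SLOPE F g" and G: "DRC g" and t: "0 \<le> t" "t < 1"
  shows "Lim (at t within {s. t < s \<and> F differentiable (at s)}) (deriv F) = g t"
proof -
  define A where "A = {s. t < s \<and> F differentiable (at s)}"
  have lp: "t islimpt A"
    unfolding islimpt_approachable
  proof (intro allI impI)
    fix e :: real assume e: "0 < e"
    obtain x where x: "t < x" "x < min (t + e) 1" "isCont g x"
      using DRC_exists_cont[OF G, of t "min (t+e) 1"] t e by auto
    have "(F has_real_derivative g x) (at x)" using SLOPE_DIFF[OF S, of x] x t by auto
    then have "x \<in> A" using x by (auto simp: A_def real_differentiable_def)
    then show "\<exists>x'\<in>A. x' \<noteq> t \<and> dist x' t < e" using x by (intro bexI[of _ x]) (auto simp: dist_real_def)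
  qed
  have gt: "(g \<longlongrightarrow> g t) (at t within A)"
    using DRC_rc[OF G t] by (rule tendsto_within_subset) (auto simp: A_def)
  have ev: "eventually (\<lambda>s. g s = deriv F s) (at t within A)"
  proof -
    have "eventually (\<lambda>s. s < 1) (at t within A)"
    proof -
      have "((\<lambda>x. x) \<longlongrightarrow> t) (at t within A)" by (rule tendsto_ident_at)
      then show ?thesis by (rule order_tendstoD(2)) (use t in auto)
    qed
    moreover have "eventually (\<lambda>s. s \<in> A) (at t within A)" by (simp add: eventually_at_filter)
    ultimately have "eventually (\<lambda>s. s < 1 \<and> s \<in> A) (at t within A)" by (rule eventually_conj)
    then show ?thesis
    proof (rule eventually_mono)
      fix s assume s: "s < 1 \<and> s \<in> A"
      then have "(F has_real_derivative deriv F s) (at s)"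
        by (auto simp: A_def DERIV_deriv_iff_real_differentiable)
      from SLOPE_deriv_eq[OF S _ _ this] s t show "g s = deriv F s" by (auto simp: A_def)
    qed
  qed
  have "(deriv F \<longlongrightarrow> g t) (at t within A)" using gt ev by (rule Lim_transform_eventually)
  moreover have "\<not> trivial_limit (at t within A)" using lp by (simp add: trivial_limit_within)
  ultimately show ?thesis unfolding A_def[symmetric] by (rule tendsto_Lim[rotated])
qed

lemma DRC_integrable:
  assumes G: "DRC g" and "0 \<le> a" "b \<le> 1"
  shows "g integrable_on {a..b}"
proof -
  have "mono_on {a..b} (\<lambda>x. - g x)"
    using DRC_mono[OF G] assms by (auto simp: mono_on_def)
  then have "(\<lambda>x. - g x) integrable_on {a..b}" by (rule integrable_on_mono_on)
  then have "(\<lambda>x. - (- g x)) integrable_on {a..b}" by (rule integrable_neg)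
  then show ?thesis by simp
qed

lemma SLOPE_FTC:
  assumes S: "SLOPE F g" and G: "DRC g" and u: "0 \<le> u" "u \<le> 1"
  shows "F u - F 0 = integral {0..u} g"
proof -
  define P where "P x = F x - integral {0..x} g" for x
  have step: "\<bar>P y - P x\<bar> \<le> (y - x) * (g x - g y)" if xy: "0 \<le> x" "x \<le> y" "y \<le> 1" for x y
  proof (cases "x = y")
    case True then show ?thesis by simp
  next
    case False
    then have xy': "x < y" using xy by simp
    have "integral {0..y} g = integral {0..x} g + integral {x..y} g"
      using Henstock_Kurzweil_Integration.integral_combine[OF xy(1) xy(2) DRC_integrable[OF G order_refl xy(3)]] by simp
    then have Pd: "P y - P x = (F y - F x) - integral {x..y} g" by (simp add: P_def)
    have gi: "g integrable_on {x..y}" using DRC_integrable[OF G xy(1) xy(3)] .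
    have i1: "integral {x..y} g \<le> integral {x..y} (\<lambda>_. g x)"
      using gi xy by (intro integral_le) (auto intro!: DRC_mono[OF G])
    have i2: "integral {x..y} (\<lambda>_. g y) \<le> integral {x..y} g"
      using gi xy by (intro integral_le) (auto intro!: DRC_mono[OF G])
    have "integral {x..y} (\<lambda>_. g x) = (y - x) * g x" "integral {x..y} (\<lambda>_. g y) = (y - x) * g y"
      using xy by auto
    with i1 i2 SLOPE_D[OF S xy(1) xy' xy(3)] Pd show ?thesis by (auto simp: abs_le_iff algebra_simps)
  qed
  have bound: "\<bar>P u - P 0\<bar> \<le> 1 / real n" if n: "n > 0" for n :: nat
  proof -
    define h where "h = u / real n"
    have h: "0 \<le> h" "h * real n = u" using u n by (auto simp: h_def)
    have xs: "0 \<le> real i * h" "real i * h \<le> 1" if "i \<le> n" for i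
    proof -
      show "0 \<le> real i * h" using h by simp
      have "real i * h \<le> real n * h" using that h by (intro mult_right_mono) auto
      then show "real i * h \<le> 1" using h u by (simp add: mult.commute)
    qed
    have "P u - P 0 = (\<Sum>i<n. P (real (Suc i) * h) - P (real i * h))"
      using sum_lessThan_telescope[of "\<lambda>i. P (real i * h)" n] h by (simp add: mult.commute)
    then have "\<bar>P u - P 0\<bar> \<le> (\<Sum>i<n. \<bar>P (real (Suc i) * h) - P (real i * h)\<bar>)"
      by (simp add: sum_abs)
    also have "\<dots> \<le> (\<Sum>i<n. h * (g (real i * h) - g (real (Suc i) * h)))"
    proof (rule sum_mono)
      fix i assume "i \<in> {..<n}"
      then have i: "Suc i \<le> n" by auto
      have "\<bar>P (real (Suc i) * h) - P (real i * h)\<bar> \<le> (real (Suc i) * h - real i * h) * (g (real i * h) - g (real (Suc i) * h))"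
        using xs[of i] xs[of "Suc i"] i h by (intro step) (auto intro: mult_right_mono)
      then show "\<bar>P (real (Suc i) * h) - P (real i * h)\<bar> \<le> h * (g (real i * h) - g (real (Suc i) * h))"
        by (simp add: algebra_simps)
    qed
    also have "\<dots> = h * (g 0 - g u)"
      using sum_lessThan_telescope'[of "\<lambda>i. g (real i * h)" n] h
      by (simp add: sum_distrib_left[symmetric] mult.commute)
    also have "\<dots> \<le> h * 1"
      using DRC_bnd[OF G, of 0] DRC_bnd[OF G, of u] u h by (intro mult_left_mono) auto
    also have "\<dots> \<le> 1 / real n" using u n by (simp add: h_def divide_right_mono)
    finally show ?thesis .
  qed
  have "P u - P 0 = 0"
  proof (rule ccontr)
    assume "P u - P 0 \<noteq> 0"
    then have "0 < \<bar>P u - P 0\<bar>" by simp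
    then obtain n where "inverse (real (Suc n)) < \<bar>P u - P 0\<bar>" using reals_Archimedean by blast
    with bound[of "Suc n"] show False by (simp add: inverse_eq_divide)
  qed
  then show ?thesis by (simp add: P_def)
qed

lemma gen_inv_bounds: "0 \<le> gen_inv g w" "gen_inv g w \<le> 1"
proof -
  have ne: "{t\<in>{0..1}. g t \<le> w} \<union> {1} \<noteq> {}" by auto
  have bb: "bdd_below ({t\<in>{0..1}. g t \<le> w} \<union> {1::real})" by (rule bdd_belowI[of _ 0]) auto
  show "0 \<le> gen_inv g w" unfolding gen_inv_def by (rule cInf_greatest[OF ne]) auto
  show "gen_inv g w \<le> 1" unfolding gen_inv_def by (rule cInf_lower[OF _ bb]) auto
qed

lemma gen_inv_mono: "w1 \<le> w2 \<Longrightarrow> gen_inv g w2 \<le> gen_inv g w1"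
  unfolding gen_inv_def
  by (rule cInf_superset_mono) (auto intro: bdd_belowI[of _ 0])

lemma gen_inv_iff:
  assumes G: "DRC g" and t: "0 \<le> t" "t < 1"
  shows "w < g t \<longleftrightarrow> t < gen_inv g w"
proof
  assume "t < gen_inv g w"
  show "w < g t"
  proof (rule ccontr)
    assume "\<not> w < g t"
    then have "t \<in> {s\<in>{0..1}. g s \<le> w} \<union> {1}" using t by auto
    then have "gen_inv g w \<le> t" unfolding gen_inv_def by (rule cInf_lower) (auto intro: bdd_belowI[of _ 0])
    with \<open>t < gen_inv g w\<close> show False by simp
  qed
next
  assume wt: "w < g t"
  have "eventually (\<lambda>s. w < g s) (at_right t)"
    using order_tendstoD(1)[OF DRC_rc[OF G t] wt] .
  then obtain b where b: "b > t" "\<And>s. t < s \<Longrightarrow> s < b \<Longrightarrow> w < g s"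
    unfolding eventually_at_right_field by blast
  define m where "m = min ((t + b) / 2) 1"
  have m: "t < m" using b t by (simp add: m_def)
  have "m \<le> gen_inv g w" unfolding gen_inv_def
  proof (rule cInf_greatest)
    show "{s\<in>{0..1}. g s \<le> w} \<union> {1} \<noteq> {}" by auto
  next
    fix e assume e: "e \<in> {s\<in>{0..1}. g s \<le> w} \<union> {1::real}"
    show "m \<le> e"
    proof (cases "e = 1")
      case True then show ?thesis by (simp add: m_def)
    next
      case False
      then have e1: "0 \<le> e" "e \<le> 1" "g e \<le> w" using e by auto
      have "\<not> e \<le> t"
      proof
        assume "e \<le> t"
        then have "g t \<le> g e" using DRC_mono[OF G e1(1) _ ] t by auto
        then show False using e1 wt by simp
      qed
      moreover have "\<not> (t < e \<and> e < b)" using b(2)[of e] e1 by auto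
      ultimately have "b \<le> e" by auto
      then show ?thesis using b(1) unfolding m_def by (simp add: min_le_iff_disj)
    qed
  qed
  then show "t < gen_inv g w" using m by simp
qed

lemma gen_inv_DRC:
  assumes G: "DRC g"
  shows "DRC (gen_inv g)"
  unfolding DRC_def
proof (intro conjI allI impI)
  fix x y :: real assume "0 \<le> x" "x \<le> y" "y \<le> 1"
  then show "gen_inv g y \<le> gen_inv g x" by (intro gen_inv_mono)
next
  fix t :: real show "0 \<le> gen_inv g t" "gen_inv g t \<le> 1" by (rule gen_inv_bounds)+
next
  fix w :: real assume "0 \<le> w" "w < 1"
  show "(gen_inv g \<longlongrightarrow> gen_inv g w) (at_right w)"
    unfolding order_tendsto_iff
  proof (intro conjI allI impI)
    fix a assume a: "gen_inv g w < a"
    show "eventually (\<lambda>s. gen_inv g s < a) (at_right w)"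
      using eventually_at_right_less[of w]
    proof (rule eventually_mono)
      fix x assume "w < x"
      then have "gen_inv g x \<le> gen_inv g w" by (intro gen_inv_mono) simp
      then show "gen_inv g x < a" using a by simp
    qed
  next
    fix a assume a: "a < gen_inv g w"
    show "eventually (\<lambda>s. a < gen_inv g s) (at_right w)"
    proof (cases "a < 0")
      case True
      then show ?thesis using gen_inv_bounds(1)[of g] by (intro always_eventually) (auto intro: less_le_trans)
    next
      case False
      define t where "t = a"
      have t: "0 \<le> t" "t < 1" using False a gen_inv_bounds(2)[of g w] by (auto simp: t_def)
      have "w < g t" using gen_inv_iff[OF G t, of w] a by (simp add: t_def)
      have "((\<lambda>s. s) \<longlongrightarrow> w) (at_right w)" by (rule tendsto_ident_at)
      from order_tendstoD(2)[OF this \<open>w < g t\<close>]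
      show ?thesis
        by (rule eventually_mono) (use gen_inv_iff[OF G t] in \<open>auto simp: t_def\<close>)
    qed
  qed
qed

lemma gen_inv_inv:
  assumes G: "DRC g" and t: "0 \<le> t" "t < 1"
  shows "gen_inv (gen_inv g) t = g t"
proof -
  have "{w\<in>{0..1}. gen_inv g w \<le> t} \<union> {1} = {g t..1}"
  proof (rule set_eqI)
    fix w
    have b: "0 \<le> g t" "g t \<le> 1" using DRC_bnd[OF G, of t] t by auto
    have "gen_inv g w \<le> t \<longleftrightarrow> g t \<le> w"
      using gen_inv_iff[OF G t, of w] by linarith
    then show "w \<in> {w\<in>{0..1}. gen_inv g w \<le> t} \<union> {1} \<longleftrightarrow> w \<in> {g t..1}"
      using b by auto
  qed
  then show ?thesis using DRC_bnd[OF G, of t] t by (simp add: gen_inv_def)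
qed

lemma gen_inv_cong:
  assumes "\<And>t. 0 \<le> t \<Longrightarrow> t < 1 \<Longrightarrow> f t = f' t"
  shows "gen_inv f = gen_inv f'"
proof
  fix w
  have "{t\<in>{0..1}. f t \<le> w} \<union> {1} = {t\<in>{0..1}. f' t \<le> w} \<union> {1::real}"
  proof (rule set_eqI)
    fix s
    show "s \<in> {t\<in>{0..1}. f t \<le> w} \<union> {1} \<longleftrightarrow> s \<in> {t\<in>{0..1}. f' t \<le> w} \<union> {1::real}"
    proof (cases "s = 1")
      case False
      then show ?thesis using assms[of s] by auto
    qed simp
  qed
  then show "gen_inv f w = gen_inv f' w" by (simp add: gen_inv_def)
qed

lemma gen_inv_zero: "0 \<le> w \<Longrightarrow> gen_inv (\<lambda>_. 0) w = 0"
proof -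
  assume "0 \<le> w"
  then have "{t\<in>{0..1}. (0::real) \<le> w} \<union> {1} = {0..1::real}" by auto
  then show ?thesis by (simp add: gen_inv_def)
qed

lemma DRC_zero: "DRC (\<lambda>_. 0)"
  by (simp add: DRC_def)

lemma SLOPE_integral:
  assumes G: "DRC g"
  shows "SLOPE (\<lambda>s. integral {0..s} g) g"
  unfolding SLOPE_def
proof (intro allI impI)
  fix x y :: real assume xy: "0 \<le> x" "x < y" "y \<le> 1"
  have "integral {0..y} g = integral {0..x} g + integral {x..y} g"
    using Henstock_Kurzweil_Integration.integral_combine[OF xy(1) _ DRC_integrable[OF G order_refl xy(3)]] xy by simp
  moreover have gi: "g integrable_on {x..y}" using DRC_integrable[OF G xy(1) xy(3)] .
  moreover have "integral {x..y} g \<le> integral {x..y} (\<lambda>_. g x)"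
    using gi xy by (intro integral_le) (auto intro!: DRC_mono[OF G])
  moreover have "integral {x..y} (\<lambda>_. g y) \<le> integral {x..y} g"
    using gi xy by (intro integral_le) (auto intro!: DRC_mono[OF G])
  moreover have "integral {x..y} (\<lambda>_. g x) = (y - x) * g x" "integral {x..y} (\<lambda>_. g y) = (y - x) * g y"
    using xy by auto
  ultimately show "(y - x) * g y \<le> integral {0..y} g - integral {0..x} g \<and>
         integral {0..y} g - integral {0..x} g \<le> (y - x) * g x" by auto
qed

definition clamp :: "real \<Rightarrow> real" where "clamp x = max 0 (min 1 x)"

lemma clamp_id[simp]: "0 \<le> x \<Longrightarrow> x \<le> 1 \<Longrightarrow> clamp x = x"
  by (simp add: clamp_def)
lemma clamp_bnd[simp]: "0 \<le> clamp x" "clamp x \<le> 1"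
  by (auto simp: clamp_def)

definition rd :: "(real \<Rightarrow> real) \<Rightarrow> real \<Rightarrow> real" where
  "rd f t = lim (\<lambda>n. (f (clamp (t + 1 / real (Suc n))) - f (clamp t)) * real (Suc n))"

definition LIPM :: "(real \<Rightarrow> real) \<Rightarrow> bool" where
  "LIPM f \<longleftrightarrow> (\<forall>x y. 0 \<le> x \<longrightarrow> x \<le> y \<longrightarrow> y \<le> 1 \<longrightarrow> 0 \<le> f y - f x \<and> f y - f x \<le> y - x)"

lemma LIPM_D: "LIPM f \<Longrightarrow> 0 \<le> x \<Longrightarrow> x \<le> y \<Longrightarrow> y \<le> 1 \<Longrightarrow> 0 \<le> f y - f x \<and> f y - f x \<le> y - x"
  unfolding LIPM_def by blast

lemma concave_slopes:
  fixes f :: "real \<Rightarrow> real"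
  assumes c: "concave_on {0..1} f" and xmy: "0 \<le> x" "x < m" "m < y" "y \<le> 1"
  shows "(f y - f x) / (y - x) \<le> (f m - f x) / (m - x)"
    and "(f y - f m) / (y - m) \<le> (f y - f x) / (y - x)"
proof -
  have cv: "convex_on {0..1} (\<lambda>x. - f x)" using c by (simp add: concave_on_def)
  note cs = convex_on_slope_le[OF cv, of x y m]
  have e1: "(- f x - - f m) / (x - m) = - ((f m - f x) / (m - x))" using xmy by (simp add: field_simps)
  have e2: "(- f x - - f y) / (x - y) = - ((f y - f x) / (y - x))" using xmy by (simp add: field_simps)
  have e3: "(- f m - - f y) / (m - y) = - ((f y - f m) / (y - m))" using xmy by (simp add: field_simps)
  show "(f y - f x) / (y - x) \<le> (f m - f x) / (m - x)" using cs(1) xmy e1 e2 by auto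
  show "(f y - f m) / (y - m) \<le> (f y - f x) / (y - x)" using cs(2) xmy e2 e3 by auto
qed

lemma slope_bnd:
  assumes "LIPM f" "0 \<le> x" "x < y" "y \<le> 1"
  shows "0 \<le> (f y - f x) / (y - x)" "(f y - f x) / (y - x) \<le> 1"
  using LIPM_D[OF assms(1,2), of y] assms by (auto simp: field_simps)

lemma rd_props:
  fixes f :: "real \<Rightarrow> real"
  assumes c: "concave_on {0..1} f" and L: "LIPM f" and t: "0 \<le> t" "t < 1"
  shows "\<And>y. t < y \<Longrightarrow> y \<le> 1 \<Longrightarrow> (f y - f t) / (y - t) \<le> rd f t"
    and "\<And>x. 0 \<le> x \<Longrightarrow> x < t \<Longrightarrow> rd f t \<le> (f t - f x) / (t - x)"
    and "0 \<le> rd f t" "rd f t \<le> 1"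
    and "\<And>a. a < rd f t \<Longrightarrow> \<exists>y. t < y \<and> y \<le> 1 \<and> a < (f y - f t) / (y - t)"
proof -
  define a where "a n = (f (clamp (t + 1 / real (Suc n))) - f (clamp t)) * real (Suc n)" for n
  obtain N :: nat where N: "1 / real (Suc N) < 1 - t"
    using reals_Archimedean[of "1 - t"] t by (auto simp: inverse_eq_divide)
  define h where "h k = 1 / real (Suc (k + N))" for k
  have h: "0 < h k" "t + h k \<le> 1" for k
  proof -
    show "0 < h k" by (simp add: h_def)
    have "h k \<le> 1 / real (Suc N)" unfolding h_def by (intro divide_left_mono) auto
    then show "t + h k \<le> 1" using N by simp
  qed
  define b where "b k = (f (t + h k) - f t) / h k" for k
  have ab: "a (k + N) = b k" for k
    using h[of k] t by (simp add: a_def b_def h_def field_simps)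
  have b_eq: "b k = (f (t + h k) - f t) / ((t + h k) - t)" for k by (simp add: b_def)
  have bb: "0 \<le> b k" "b k \<le> 1" for k
    using slope_bnd[OF L t(1), of "t + h k"] h[of k] by (simp_all add: b_eq)
  have hmono: "h k' \<le> h k" if "k \<le> k'" for k k'
    unfolding h_def using that by (intro divide_left_mono) auto
  have inc: "incseq b"
  proof (rule incseq_SucI)
    fix k
    have "h (Suc k) < h k" unfolding h_def by (intro divide_strict_left_mono) auto
    from concave_slopes(1)[OF c t(1), of "t + h (Suc k)" "t + h k"] this h[of k] h[of "Suc k"]
    show "b k \<le> b (Suc k)" by (simp add: b_eq)
  qed
  have bda: "bdd_above (range b)" using bb by (intro bdd_aboveI[of _ 1]) auto
  have "b \<longlonglongrightarrow> (SUP k. b k)" by (rule LIMSEQ_incseq_SUP[OF bda inc])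
  then have "(\<lambda>k. a (k + N)) \<longlonglongrightarrow> (SUP k. b k)" by (simp add: ab)
  then have "a \<longlonglongrightarrow> (SUP k. b k)" by (rule LIMSEQ_offset)
  then have rdS: "rd f t = (SUP k. b k)" unfolding rd_def a_def[symmetric] by (rule limI)
  have upper: "b k \<le> rd f t" for k unfolding rdS by (rule cSUP_upper[OF _ bda]) simp
  show "\<And>y. t < y \<Longrightarrow> y \<le> 1 \<Longrightarrow> (f y - f t) / (y - t) \<le> rd f t"
  proof -
    fix y assume y: "t < y" "y \<le> 1"
    obtain k :: nat where k: "1 / real (Suc k) < y - t"
      using reals_Archimedean[of "y - t"] y by (auto simp: inverse_eq_divide)
    have "h k \<le> 1 / real (Suc k)" unfolding h_def by (intro divide_left_mono) auto
    then have hk: "t + h k < y" using k by simp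
    have "(f y - f t) / (y - t) \<le> b k"
      using concave_slopes(1)[OF c t(1), of "t + h k" y] hk h[of k] y by (simp add: b_eq)
    then show "(f y - f t) / (y - t) \<le> rd f t" using upper[of k] by simp
  qed
  show "\<And>x. 0 \<le> x \<Longrightarrow> x < t \<Longrightarrow> rd f t \<le> (f t - f x) / (t - x)"
  proof -
    fix x assume x: "0 \<le> x" "x < t"
    show "rd f t \<le> (f t - f x) / (t - x)" unfolding rdS
    proof (rule cSUP_least)
      fix k
      have "b k \<le> (f (t + h k) - f x) / ((t + h k) - x)"
        using concave_slopes(2)[OF c x(1), of t "t + h k"] x h[of k] by (simp add: b_eq)
      also have "\<dots> \<le> (f t - f x) / (t - x)"
        using concave_slopes(1)[OF c x(1), of t "t + h k"] x h[of k] by simp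
      finally show "b k \<le> (f t - f x) / (t - x)" .
    qed simp
  qed
  show "0 \<le> rd f t" using upper[of 0] bb[of 0] by simp
  show "rd f t \<le> 1" unfolding rdS by (rule cSUP_least) (use bb in auto)
  show "\<And>a'. a' < rd f t \<Longrightarrow> \<exists>y. t < y \<and> y \<le> 1 \<and> a' < (f y - f t) / (y - t)"
  proof -
    fix a' assume "a' < rd f t"
    then obtain k where "a' < b k" unfolding rdS using less_cSUP_iff[OF _ bda] by auto
    then show "\<exists>y. t < y \<and> y \<le> 1 \<and> a' < (f y - f t) / (y - t)"
      using h[of k] by (intro exI[of _ "t + h k"]) (simp add: b_eq)
  qed
qed

lemma rd_one: "rd f 1 = 0"
  unfolding rd_def by (simp add: clamp_def)

lemma rd_SLOPE:
  assumes c: "concave_on {0..1} f" and L: "LIPM f"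
  shows "SLOPE f (rd f)"
  unfolding SLOPE_def
proof (intro allI impI conjI)
  fix x y :: real assume xy: "0 \<le> x" "x < y" "y \<le> 1"
  show "(y - x) * rd f y \<le> f y - f x"
  proof (cases "y = 1")
    case True
    then show ?thesis using LIPM_D[OF L xy(1), of y] xy by (simp add: rd_one)
  next
    case False
    then have "rd f y \<le> (f y - f x) / (y - x)" using rd_props(2)[OF c L, of y x] xy by auto
    then show ?thesis using xy by (simp add: field_simps)
  qed
  have "(f y - f x) / (y - x) \<le> rd f x" using rd_props(1)[OF c L, of x y] xy by auto
  then show "f y - f x \<le> (y - x) * rd f x" using xy by (simp add: field_simps)
qed

lemma rd_DRC:
  assumes c: "concave_on {0..1} f" and L: "LIPM f"
  shows "DRC (rd f)"
  unfolding DRC_def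
proof (intro conjI allI impI)
  fix x y :: real assume xy: "0 \<le> x" "x \<le> y" "y \<le> 1"
  show "rd f y \<le> rd f x"
  proof (cases "x = y")
    case False
    then have xy': "x < y" using xy by simp
    show ?thesis
    proof (cases "y = 1")
      case True
      then show ?thesis using rd_props(3)[OF c L, of x] xy' xy by (simp add: rd_one)
    next
      case False
      then have "rd f y \<le> (f y - f x) / (y - x)" using rd_props(2)[OF c L, of y x] xy xy' by auto
      also have "\<dots> \<le> rd f x" using rd_props(1)[OF c L, of x y] xy xy' by auto
      finally show ?thesis .
    qed
  qed simp
next
  fix t :: real assume t: "0 \<le> t" "t < 1"
  have mono: "rd f s \<le> rd f t" if "t < s" "s \<le> 1" for s
  proof (cases "s = 1")
    case True then show ?thesis using rd_props(3)[OF c L t] by (simp add: rd_one)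
  next
    case False
    then have "rd f s \<le> (f s - f t) / (s - t)" using rd_props(2)[OF c L, of s t] that t by auto
    also have "\<dots> \<le> rd f t" using rd_props(1)[OF c L t, of s] that by auto
    finally show ?thesis .
  qed
  have ev1: "eventually (\<lambda>s. s \<in> {t<..<1}) (at_right t)" using eventually_at_right_real[of t 1] t by simp
  have fcont: "(f \<longlongrightarrow> f t) (at_right t)"
    unfolding tendsto_iff
  proof (intro allI impI)
    fix e :: real assume e: "0 < e"
    have "eventually (\<lambda>s. s \<in> {t<..<min 1 (t + e)}) (at_right t)"
      using eventually_at_right_real[of t "min 1 (t + e)"] t e by simp
    then show "eventually (\<lambda>s. dist (f s) (f t) < e) (at_right t)"
    proof (rule eventually_mono)
      fix s assume s: "s \<in> {t<..<min 1 (t + e)}"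
      then have "0 \<le> f s - f t \<and> f s - f t \<le> s - t" using LIPM_D[OF L t(1), of s] by auto
      then show "dist (f s) (f t) < e" using s by (auto simp: dist_real_def)
    qed
  qed
  show "(rd f \<longlongrightarrow> rd f t) (at_right t)"
    unfolding order_tendsto_iff
  proof (intro conjI allI impI)
    fix a assume a: "rd f t < a"
    show "eventually (\<lambda>s. rd f s < a) (at_right t)"
      using ev1 by (rule eventually_mono) (use mono a in force)
  next
    fix a assume a: "a < rd f t"
    obtain y where y: "t < y" "y \<le> 1" "a < (f y - f t) / (y - t)" using rd_props(5)[OF c L t a] by blast
    have "((\<lambda>s. (f y - f s) / (y - s)) \<longlongrightarrow> (f y - f t) / (y - t)) (at_right t)"
      using fcont y by (intro tendsto_intros) auto
    from order_tendstoD(1)[OF this y(3)]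
    have ev2: "eventually (\<lambda>s. a < (f y - f s) / (y - s)) (at_right t)" .
    have ev3: "eventually (\<lambda>s. s \<in> {t<..<y}) (at_right t)" using eventually_at_right_real[of t y] y by simp
    have "eventually (\<lambda>s. a < (f y - f s) / (y - s) \<and> s \<in> {t<..<y}) (at_right t)"
      using ev2 ev3 by (rule eventually_conj)
    then show "eventually (\<lambda>s. a < rd f s) (at_right t)"
    proof (rule eventually_mono)
      fix s assume s: "a < (f y - f s) / (y - s) \<and> s \<in> {t<..<y}"
      then have "(f y - f s) / (y - s) \<le> rd f s" using rd_props(1)[OF c L, of s y] t y by auto
      then show "a < rd f s" using s by simp
    qed
  qed
next
  fix t :: real assume t: "0 \<le> t" "t \<le> 1"
  have "0 \<le> rd f t \<and> rd f t \<le> 1"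
  proof (cases "t = 1")
    case True then show ?thesis by (simp add: rd_one)
  next
    case False then show ?thesis using rd_props(3,4)[OF c L, of t] t by auto
  qed
  then show "0 \<le> rd f t" "rd f t \<le> 1" by auto
qed

lemma copula_2inc:
  assumes "copula C" "0 \<le> u1" "u1 \<le> u2" "u2 \<le> 1" "0 \<le> v1" "v1 \<le> v2" "v2 \<le> 1"
  shows "C u2 v2 - C u2 v1 - C u1 v2 + C u1 v1 \<ge> 0"
  using assms unfolding copula_def by blast

lemma copula_bd:
  assumes "copula C" "0 \<le> u" "u \<le> 1"
  shows "C u 0 = 0" "C 0 u = 0" "C u 1 = u" "C 1 u = u"
  using assms unfolding copula_def by auto

lemma copula_LIPM:
  assumes C: "copula C" and u: "0 \<le> u" "u \<le> 1"
  shows "LIPM (C u)"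
  unfolding LIPM_def
proof (intro allI impI conjI)
  fix x y :: real assume xy: "0 \<le> x" "x \<le> y" "y \<le> 1"
  have "C u y - C u x - C 0 y + C 0 x \<ge> 0" using copula_2inc[OF C, of 0 u x y] u xy by auto
  then show "0 \<le> C u y - C u x" using copula_bd[OF C, of x] copula_bd[OF C, of y] xy by auto
  have "C 1 y - C 1 x - C u y + C u x \<ge> 0" using copula_2inc[OF C, of u 1 x y] u xy by auto
  then show "C u y - C u x \<le> y - x" using copula_bd[OF C, of x] copula_bd[OF C, of y] xy by auto
qed

lemma copula_lip1:
  assumes C: "copula C" and u: "0 \<le> u1" "u1 \<le> u2" "u2 \<le> 1" and v: "0 \<le> v" "v \<le> 1"
  shows "0 \<le> C u2 v - C u1 v" "C u2 v - C u1 v \<le> u2 - u1"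
proof -
  have "C u2 v - C u2 0 - C u1 v + C u1 0 \<ge> 0" using copula_2inc[OF C, of u1 u2 0 v] u v by auto
  then show "0 \<le> C u2 v - C u1 v" using copula_bd[OF C, of u1] copula_bd[OF C, of u2] u by auto
  have "C u2 1 - C u2 v - C u1 1 + C u1 v \<ge> 0" using copula_2inc[OF C, of u1 u2 v 1] u v by auto
  then show "C u2 v - C u1 v \<le> u2 - u1" using copula_bd[OF C, of u1] copula_bd[OF C, of u2] u by auto
qed

lemma SI_facts:
  assumes D: "SI_copula D" and u: "0 \<le> u" "u \<le> 1"
  shows "SLOPE (D u) (rd (D u))" "DRC (rd (D u))" "D u 0 = 0"
proof -
  have C: "copula D" and cc: "concave_on {0..1} (D u)" using D u unfolding SI_copula_def by auto
  show "SLOPE (D u) (rd (D u))" by (rule rd_SLOPE[OF cc copula_LIPM[OF C u]])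
  show "DRC (rd (D u))" by (rule rd_DRC[OF cc copula_LIPM[OF C u]])
  show "D u 0 = 0" using copula_bd[OF C u] by simp
qed

lemma partial2_plus_SLOPE:
  assumes "SLOPE (C v) g" "DRC g" "0 \<le> t" "t < 1"
  shows "partial2_plus C v t = g t"
proof -
  have "partial2_plus C v t = Lim (at t within {s. t < s \<and> C v differentiable (at s)}) (deriv (C v))"
    unfolding partial2_plus_def partial2_def by simp
  also have "\<dots> = g t" by (rule SLOPE_PP[OF assms])
  finally show ?thesis .
qed

definition GI :: "(real \<Rightarrow> real \<Rightarrow> real) \<Rightarrow> real \<Rightarrow> real \<Rightarrow> real" where
  "GI D u = gen_inv (rd (D u))"

lemma S_op_eq:
  assumes D: "SI_copula D" and u: "0 \<le> u" "u \<le> 1"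
  shows "S_op D u = (\<lambda>s. integral {0..s} (GI D u))"
proof -
  have "gen_inv (partial2_plus D u) = GI D u"
    unfolding GI_def
    by (rule gen_inv_cong) (rule partial2_plus_SLOPE[where C=D and v=u, OF SI_facts(1,2)[OF D u]])
  then show ?thesis by (simp add: S_op_def[abs_def])
qed

lemma S_facts:
  assumes D: "SI_copula D" and u: "0 \<le> u" "u \<le> 1"
  shows "SLOPE (S_op D u) (GI D u)" "DRC (GI D u)"
proof -
  show G: "DRC (GI D u)" unfolding GI_def by (rule gen_inv_DRC[OF SI_facts(2)[OF D u]])
  show "SLOPE (S_op D u) (GI D u)" unfolding S_op_eq[OF D u] by (rule SLOPE_integral[OF G])
qed

theorem part_i:
  assumes D: "SI_copula D" and v: "0 \<le> v" "v \<le> 1" and u: "0 \<le> u" "u \<le> 1"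
  shows "S_op (S_op D) v u = D v u"
proof -
  have g: "DRC (rd (D v))" "SLOPE (D v) (rd (D v))" using SI_facts[OF D v] by auto
  have "gen_inv (partial2_plus (S_op D) v) = gen_inv (GI D v)"
    by (rule gen_inv_cong) (rule partial2_plus_SLOPE[where C="S_op D" and v=v, OF S_facts[OF D v]])
  then have "S_op (S_op D) v u = integral {0..u} (gen_inv (GI D v))"
    by (simp add: S_op_def)
  also have "\<dots> = integral {0..u} (rd (D v))"
  proof (rule integral_spike[of "{1}"])
    fix x assume "x \<in> {0..u} - {1}"
    then have "0 \<le> x" "x < 1" using u by auto
    then show "rd (D v) x = gen_inv (GI D v) x" unfolding GI_def by (rule gen_inv_inv[OF g(1), symmetric])
  qed simp
  also have "\<dots> = D v u - D v 0" by (rule SLOPE_FTC[OF g(2) g(1) u, symmetric])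
  also have "\<dots> = D v u" using SI_facts(3)[OF D v] by simp
  finally show ?thesis .
qed

lemma emeasure_xor: "emeasure lborel {x::real. (x < p) \<noteq> (x < q)} = ennreal \<bar>p - q\<bar>"
proof -
  have "{x::real. (x < p) \<noteq> (x < q)} = {min p q..<max p q}" by auto
  then show ?thesis by (simp add: abs_real_def min_def max_def)
qed

lemma emeasure_xor_set: "{x::real. (x < p) \<noteq> (x < q)} = {min p q..<max p q}" by auto

lemma ident:
  assumes A: "DRC a" and B: "DRC b"
    and ma[measurable]: "a \<in> borel_measurable borel" and mb[measurable]: "b \<in> borel_measurable borel"
  shows "(\<integral>\<^sup>+ t. indicator {0..1} t * ennreal \<bar>a t - b t\<bar> \<partial>lborel)
       = (\<integral>\<^sup>+ w. indicator {0..1} w * ennreal \<bar>gen_inv a w - gen_inv b w\<bar> \<partial>lborel)"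
proof -
  define Z where "Z = {x::real\<times>real. 0 \<le> fst x \<and> fst x < 1 \<and> ((snd x < a (fst x)) \<noteq> (snd x < b (fst x)))}"
  have Zeq: "Z = {x::real\<times>real. 0 \<le> fst x \<and> fst x < 1 \<and> ((snd x < a (fst x) \<and> \<not> snd x < b (fst x)) \<or> (\<not> snd x < a (fst x) \<and> snd x < b (fst x)))}"
    unfolding Z_def by auto
  have "{x \<in> space (lborel \<Otimes>\<^sub>M lborel). 0 \<le> fst x \<and> fst x < 1 \<and> ((snd x < a (fst x) \<and> \<not> snd x < b (fst x)) \<or> (\<not> snd x < a (fst x) \<and> snd x < b (fst x)))} \<in> sets (lborel \<Otimes>\<^sub>M lborel)"
    by measurable
  then have Zm: "Z \<in> sets (lborel \<Otimes>\<^sub>M lborel)" unfolding Zeq by (simp add: space_pair_measure)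
  have fm: "(\<lambda>(t, w). indicator Z (t, w) :: ennreal) \<in> borel_measurable (lborel \<Otimes>\<^sub>M lborel)"
    using Zm by simp
  have I1: "(\<integral>\<^sup>+ w. indicator Z (t, w) \<partial>lborel) = indicator {0..<1} t * ennreal \<bar>a t - b t\<bar>" for t
  proof (cases "0 \<le> t \<and> t < 1")
    case True
    have "(\<lambda>w. indicator Z (t, w) :: ennreal) = indicator {w. (w < a t) \<noteq> (w < b t)}"
      using True by (auto simp: Z_def indicator_def fun_eq_iff)
    moreover have "{w. (w < a t) \<noteq> (w < b t)} \<in> sets lborel" unfolding emeasure_xor_set by simp
    ultimately show ?thesis using True emeasure_xor[of "a t" "b t"] by simp
  next
    case False
    then have "(\<lambda>w. indicator Z (t, w) :: ennreal) = (\<lambda>_. 0)"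
      by (auto simp: Z_def indicator_def fun_eq_iff)
    then show ?thesis using False by simp
  qed
  have I2: "(\<integral>\<^sup>+ t. indicator Z (t, w) \<partial>lborel) = indicator {0..<1} w * ennreal \<bar>gen_inv a w - gen_inv b w\<bar>" for w
  proof (cases "0 \<le> w \<and> w < 1")
    case True
    have "(\<lambda>t. indicator Z (t, w) :: ennreal) = indicator {t. (t < gen_inv a w) \<noteq> (t < gen_inv b w)}"
    proof
      fix t
      show "(indicator Z (t, w) :: ennreal) = indicator {t. (t < gen_inv a w) \<noteq> (t < gen_inv b w)} t"
      proof (cases "0 \<le> t \<and> t < 1")
        case True
        then show ?thesis using gen_inv_iff[OF A, of t w] gen_inv_iff[OF B, of t w]
          by (auto simp: Z_def indicator_def)
      next
        case False
        then have "\<not> ((t < gen_inv a w) \<noteq> (t < gen_inv b w))"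
          using gen_inv_bounds[of a w] gen_inv_bounds[of b w] by auto
        then show ?thesis using False by (auto simp: Z_def indicator_def)
      qed
    qed
    moreover have "{t. (t < gen_inv a w) \<noteq> (t < gen_inv b w)} \<in> sets lborel" unfolding emeasure_xor_set by simp
    ultimately show ?thesis using True emeasure_xor[of "gen_inv a w" "gen_inv b w"] by simp
  next
    case False
    have "(\<lambda>t. indicator Z (t, w) :: ennreal) = (\<lambda>_. 0)"
    proof
      fix t
      show "(indicator Z (t, w) :: ennreal) = 0"
      proof (cases "0 \<le> t \<and> t < 1")
        case True
        then have "0 \<le> a t" "a t \<le> 1" "0 \<le> b t" "b t \<le> 1" using DRC_bnd[OF A, of t] DRC_bnd[OF B, of t] by auto
        then show ?thesis using False by (auto simp: Z_def indicator_def)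
      qed (auto simp: Z_def indicator_def)
    qed
    then show ?thesis using False by simp
  qed
  have "(\<integral>\<^sup>+ t. indicator {0..1} t * ennreal \<bar>a t - b t\<bar> \<partial>lborel)
      = (\<integral>\<^sup>+ t. indicator {0..<1} t * ennreal \<bar>a t - b t\<bar> \<partial>lborel)"
    by (rule nn_integral_cong_AE) (use AE_lborel_singleton[of 1] in \<open>auto elim!: eventually_mono simp: indicator_def\<close>)
  also have "\<dots> = (\<integral>\<^sup>+ t. \<integral>\<^sup>+ w. indicator Z (t, w) \<partial>lborel \<partial>lborel)" by (simp add: I1)
  also have "\<dots> = (\<integral>\<^sup>+ w. \<integral>\<^sup>+ t. indicator Z (t, w) \<partial>lborel \<partial>lborel)"
    using lborel_pair.Fubini'[of "\<lambda>t w. indicator Z (t, w)"] fm by simp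
  also have "\<dots> = (\<integral>\<^sup>+ w. indicator {0..<1} w * ennreal \<bar>gen_inv a w - gen_inv b w\<bar> \<partial>lborel)" by (simp add: I2)
  also have "\<dots> = (\<integral>\<^sup>+ w. indicator {0..1} w * ennreal \<bar>gen_inv a w - gen_inv b w\<bar> \<partial>lborel)"
    by (rule nn_integral_cong_AE) (use AE_lborel_singleton[of 1] in \<open>auto elim!: eventually_mono simp: indicator_def\<close>)
  finally show ?thesis .
qed

lemma clamp_lip: "\<bar>clamp a - clamp b\<bar> \<le> \<bar>a - b\<bar>"
  unfolding clamp_def by (auto simp: max_def min_def abs_if)

lemma copula_lip_abs:
  assumes C: "copula C" and "0 \<le> u1" "u1 \<le> 1" "0 \<le> u2" "u2 \<le> 1" "0 \<le> v1" "v1 \<le> 1" "0 \<le> v2" "v2 \<le> 1"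
  shows "\<bar>C u1 v1 - C u2 v2\<bar> \<le> \<bar>u1 - u2\<bar> + \<bar>v1 - v2\<bar>"
proof -
  have a: "\<bar>C u1 v1 - C u2 v1\<bar> \<le> \<bar>u1 - u2\<bar>"
  proof (cases "u1 \<le> u2")
    case True then show ?thesis using copula_lip1[OF C, of u1 u2 v1] assms by auto
  next
    case False then show ?thesis using copula_lip1[OF C, of u2 u1 v1] assms by auto
  qed
  have b: "\<bar>C u2 v1 - C u2 v2\<bar> \<le> \<bar>v1 - v2\<bar>"
  proof (cases "v1 \<le> v2")
    case True then show ?thesis using LIPM_D[OF copula_LIPM[OF C, of u2], of v1 v2] assms by auto
  next
    case False then show ?thesis using LIPM_D[OF copula_LIPM[OF C, of u2], of v2 v1] assms by auto
  qed
  show ?thesis using a b by linarith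
qed

lemma Dc_cont:
  assumes C: "copula D"
  shows "continuous_on UNIV (\<lambda>x::real\<times>real. D (clamp (fst x)) (clamp (snd x)))"
proof (rule lipschitz_on_continuous_on)
  show "2-lipschitz_on UNIV (\<lambda>x::real\<times>real. D (clamp (fst x)) (clamp (snd x)))"
  proof (rule lipschitz_onI)
    fix x y :: "real \<times> real"
    have "\<bar>D (clamp (fst x)) (clamp (snd x)) - D (clamp (fst y)) (clamp (snd y))\<bar>
        \<le> \<bar>clamp (fst x) - clamp (fst y)\<bar> + \<bar>clamp (snd x) - clamp (snd y)\<bar>"
      by (rule copula_lip_abs[OF C]) simp_all
    also have "\<dots> \<le> dist (fst x) (fst y) + dist (snd x) (snd y)"
      using clamp_lip[of "fst x" "fst y"] clamp_lip[of "snd x" "snd y"] by (simp add: dist_real_def)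
    also have "\<dots> \<le> 2 * dist x y" using dist_fst_le[of x y] dist_snd_le[of x y] by simp
    finally show "dist (D (clamp (fst x)) (clamp (snd x))) (D (clamp (fst y)) (clamp (snd y))) \<le> 2 * dist x y"
      by (simp add: dist_real_def)
  qed simp
qed

lemma HD_meas:
  assumes C: "copula D"
  shows "(\<lambda>x. rd (D (clamp (fst x))) (snd x)) \<in> borel_measurable borel"
  unfolding rd_def
proof (rule borel_measurable_lim_metric)
  fix i :: nat
  define c :: real where "c = 1 / real (Suc i)"
  have "continuous_on UNIV (\<lambda>x::real\<times>real. D (clamp (fst ((\<lambda>x. (fst x, snd x + c)) x))) (clamp (snd ((\<lambda>x. (fst x, snd x + c)) x))))"
    by (rule continuous_on_compose2[OF Dc_cont[OF C]]) (auto intro!: continuous_intros)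
  then have "continuous_on UNIV (\<lambda>x::real\<times>real. (D (clamp (fst x)) (clamp (snd x + c)) - D (clamp (fst x)) (clamp (snd x))) * real (Suc i))"
    using Dc_cont[OF C] by (auto intro!: continuous_intros)
  then show "(\<lambda>x. (D (clamp (fst x)) (clamp (snd x + 1 / real (Suc i))) - D (clamp (fst x)) (clamp (snd x))) * real (Suc i)) \<in> borel_measurable borel"
    unfolding c_def by (rule borel_measurable_continuous_onI)
qed

lemma rd_DRC_clamp:
  assumes D: "SI_copula D"
  shows "DRC (rd (D (clamp u)))"
  using SI_facts(2)[OF D, of "clamp u"] by simp

lemma GD_meas:
  assumes D: "SI_copula D"
  shows "(\<lambda>x. gen_inv (rd (D (clamp (fst x)))) (snd x)) \<in> borel_measurable borel"
  unfolding borel_measurable_iff_greater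
proof
  fix a :: real
  have C: "copula D" using D by (simp add: SI_copula_def)
  note HM = HD_meas[OF C]
  show "{w \<in> space borel. a < gen_inv (rd (D (clamp (fst w)))) (snd w)} \<in> sets borel"
  proof (cases "a < 0")
    case True
    then have "{w \<in> space borel. a < gen_inv (rd (D (clamp (fst w)))) (snd w)} = UNIV"
      using gen_inv_bounds(1) by (auto intro: less_le_trans)
    then show ?thesis by simp
  next
    case False
    show ?thesis
    proof (cases "a < 1")
      case False
      then have "{w \<in> space borel. a < gen_inv (rd (D (clamp (fst w)))) (snd w)} = {}"
        using gen_inv_bounds(2) by (auto simp: not_less intro: order.trans)
      then show ?thesis by simp
    next
      case True
      have "{w \<in> space borel. a < gen_inv (rd (D (clamp (fst w)))) (snd w)} = {w \<in> space borel. snd w < rd (D (clamp (fst w))) a}"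
        using gen_inv_iff[OF rd_DRC_clamp[OF D], of a] True \<open>\<not> a < 0\<close> by auto
      also have "\<dots> \<in> sets borel"
      proof -
        have m1: "(\<lambda>w::real\<times>real. (fst w, a)) \<in> borel_measurable borel"
          by (intro borel_measurable_continuous_onI continuous_intros)
        have "(\<lambda>w::real\<times>real. rd (D (clamp (fst ((fst w, a))))) (snd ((fst w, a)))) \<in> borel_measurable borel"
          by (rule measurable_compose[OF m1 HM])
        then have [measurable]: "(\<lambda>w::real\<times>real. rd (D (clamp (fst w))) a) \<in> borel_measurable borel" by simp
        have ms: "(\<lambda>w::real\<times>real. snd w) \<in> borel_measurable borel"
          by (intro borel_measurable_continuous_onI continuous_intros)
        show ?thesis by (rule borel_measurable_less[OF ms]) measurable
      qed
      finally show ?thesis .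
    qed
  qed
qed

lemma rd_meas1:
  assumes C: "copula D" and u: "0 \<le> u" "u \<le> 1"
  shows "rd (D u) \<in> borel_measurable borel"
proof -
  have m1: "(\<lambda>t::real. (u, t)) \<in> borel_measurable borel"
    by (intro borel_measurable_continuous_onI continuous_intros)
  have "(\<lambda>t. rd (D (clamp (fst (u, t)))) (snd (u, t))) \<in> borel_measurable borel"
    by (rule measurable_compose[OF m1 HD_meas[OF C]])
  then show ?thesis using u by simp
qed

lemma seq_to_v: "(\<lambda>n. v - v / real (n+2)) \<longlonglongrightarrow> (v::real)"
proof -
  have "(\<lambda>n. v / real n) \<longlonglongrightarrow> 0" by (rule lim_const_over_n)
  then have "(\<lambda>n. v / real (n + 2)) \<longlonglongrightarrow> 0" by (rule LIMSEQ_ignore_initial_segment)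
  then have "(\<lambda>n. v - v / real (n + 2)) \<longlonglongrightarrow> v - 0" by (intro tendsto_intros)
  then show ?thesis by simp
qed

lemma key_disc:
  fixes h :: "real \<Rightarrow> real" and q :: real
  assumes v: "0 < v" "v < 1"
    and q: "\<forall>n::nat. h v < q \<and> q < h (v - v / real (n+2))"
  shows "\<not> isCont h v"
proof
  assume c: "isCont h v"
  have "(\<lambda>n. h (v - v / real (n+2))) \<longlonglongrightarrow> h v"
    by (rule isCont_tendsto_compose[OF c seq_to_v])
  moreover have "\<exists>N. \<forall>n\<ge>N. q \<le> h (v - v / real (n+2))" 
  proof (intro exI[of _ 0] allI impI)
    fix n :: nat
    from q have "q < h (v - v / real (n+2))" by blast
    then show "q \<le> h (v - v / real (n+2))" by (rule less_imp_le)
  qed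
  ultimately have "q \<le> h v" by (rule LIMSEQ_le_const)
  then show False using q by auto
qed

lemma key_cont:
  assumes G: "DRC h" and v: "0 < v" "v < 1"
    and nq: "\<not> (\<exists>q::rat. \<forall>n::nat. h v < of_rat q \<and> of_rat q < h (v - v / real (n+2)))"
  shows "isCont h v"
proof (rule ccontr)
  assume nc: "\<not> isCont h v"
  have R: "(h \<longlongrightarrow> h v) (at_right v)" using DRC_rc[OF G] v by auto
  have NT: "\<not> (h \<longlongrightarrow> h v) (at_left v)"
  proof
    assume "(h \<longlongrightarrow> h v) (at_left v)"
    then have "(h \<longlongrightarrow> h v) (at v)" using R by (rule filterlim_split_at)
    then show False using nc by (simp add: isCont_def)
  qed
  then obtain a where a: "(h v < a \<and> \<not> eventually (\<lambda>s. h s < a) (at_left v)) \<or> (a < h v \<and> \<not> eventually (\<lambda>s. a < h s) (at_left v))"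
  proof -
    have "\<not> ((\<forall>a. a < h v \<longrightarrow> eventually (\<lambda>s. a < h s) (at_left v)) \<and> (\<forall>a. h v < a \<longrightarrow> eventually (\<lambda>s. h s < a) (at_left v)))"
      using NT unfolding order_tendsto_iff by blast
    then show ?thesis using that by blast
  qed
  have evl: "eventually (\<lambda>s. s \<in> {0<..<v}) (at_left v)" using eventually_at_left_real[of 0 v] v by simp
  have "\<not> (a < h v \<and> \<not> eventually (\<lambda>s. a < h s) (at_left v))"
  proof
    assume a2: "a < h v \<and> \<not> eventually (\<lambda>s. a < h s) (at_left v)"
    have "eventually (\<lambda>s. a < h s) (at_left v)"
      using evl
    proof (rule eventually_mono)
      fix s assume "s \<in> {0<..<v}"
      then have "h v \<le> h s" using DRC_mono[OF G, of s v] v by auto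
      then show "a < h s" using a2 by simp
    qed
    then show False using a2 by simp
  qed
  with a have a1: "h v < a" "\<not> eventually (\<lambda>s. h s < a) (at_left v)" by auto
  obtain q :: rat where q: "h v < of_rat q" "of_rat q < a" using of_rat_dense[OF a1(1)] by blast
  have "\<forall>n::nat. h v < of_rat q \<and> of_rat q < h (v - v / real (n+2))"
  proof
    fix n :: nat
    show "h v < of_rat q \<and> of_rat q < h (v - v / real (n+2))"
    proof (rule ccontr)
      assume "\<not> ?thesis"
      then have hn: "h (v - v / real (n+2)) \<le> of_rat q" using q by auto
      define p where "p = v - v / real (n+2)"
      have p: "0 \<le> p" "p < v"
      proof -
        have "v / real (n+2) \<le> v" using v by (simp add: divide_le_eq)
        then show "0 \<le> p" by (simp add: p_def)
        show "p < v" using v by (simp add: p_def)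
      qed
      have "eventually (\<lambda>s. s \<in> {p<..<v}) (at_left v)" using eventually_at_left_real[of p v] p by simp
      then have "eventually (\<lambda>s. h s < a) (at_left v)"
      proof (rule eventually_mono)
        fix s assume s: "s \<in> {p<..<v}"
        then have "h s \<le> h p" using DRC_mono[OF G, of p s] p v by auto
        then show "h s < a" using hn q p_def by simp
      qed
      then show False using a1 by simp
    qed
  qed
  then show False using nq by blast
qed

lemma AE_deriv:
  fixes g :: "real \<times> real \<Rightarrow> real" and F :: "real \<Rightarrow> real \<Rightarrow> real"
  assumes gm: "g \<in> borel_measurable borel"
    and gp: "\<And>u. 0 \<le> u \<Longrightarrow> u \<le> 1 \<Longrightarrow> DRC (\<lambda>t. g (u, t)) \<and> SLOPE (F u) (\<lambda>t. g (u, t))"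
  shows "AE x in lborel. x \<in> {0..1} \<times> {0..1} \<longrightarrow> (F (fst x) has_real_derivative g x) (at (snd x))"
proof -
  define Q where "Q x \<longleftrightarrow> (fst x \<in> {0..1} \<and> snd x \<in> {0..1} \<longrightarrow> 0 < snd x \<and> snd x < 1 \<and>
     \<not> (\<exists>q::rat. \<forall>n::nat. g x < of_rat q \<and> of_rat q < g (fst x, snd x - snd x / real (n+2))))" for x
  have gm2[measurable]: "g \<in> borel_measurable (lborel \<Otimes>\<^sub>M lborel)" using gm by (simp add: lborel_prod)
  have gn[measurable]: "(\<lambda>x. g (fst x, snd x - snd x / real (n+2))) \<in> borel_measurable (lborel \<Otimes>\<^sub>M lborel)" for n
  proof -
    have m1: "(\<lambda>x::real\<times>real. (fst x, snd x - snd x / real (n+2))) \<in> borel_measurable borel"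
      by (intro borel_measurable_continuous_onI continuous_intros) simp
    have "(\<lambda>x. g (fst x, snd x - snd x / real (n+2))) \<in> borel_measurable borel"
      using measurable_compose[OF m1 gm] by simp
    then show ?thesis by (simp add: lborel_prod)
  qed
  have Qm: "{x \<in> space (lborel \<Otimes>\<^sub>M lborel). Q x} \<in> sets (lborel \<Otimes>\<^sub>M lborel)"
    unfolding Q_def by measurable
  have AEu: "AE u in lborel. AE v in lborel. Q (u, v)"
  proof (rule AE_I2)
    fix u :: real
    show "AE v in lborel. Q (u, v)"
    proof (cases "0 \<le> u \<and> u \<le> 1")
      case False then show ?thesis by (intro AE_I2) (auto simp: Q_def)
    next
      case True
      define N where "N = {0, 1} \<union> {a\<in>{0<..<1}. \<not> isCont (\<lambda>t. g (u, t)) a}"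
      have "countable N" unfolding N_def using DRC_countable_discont[of "\<lambda>t. g (u, t)"] gp True by auto
      then have "N \<in> null_sets lborel" by (rule countable_imp_null_set_lborel)
      moreover have "{v \<in> space lborel. \<not> Q (u, v)} \<subseteq> N"
      proof
        fix v assume "v \<in> {v \<in> space lborel. \<not> Q (u, v)}"
        then have nq: "\<not> Q (u, v)" by simp
        show "v \<in> N"
        proof (cases "v = 0 \<or> v = 1")
          case True then show ?thesis unfolding N_def by blast
        next
          case False
          with nq True obtain q :: rat where v: "0 < v" "v < 1"
              and q: "\<forall>n::nat. g (u, v) < of_rat q \<and> of_rat q < g (u, v - v / real (n+2))"
            unfolding Q_def by auto
          have "\<not> isCont (\<lambda>t. g (u, t)) v" using key_disc[of v "\<lambda>t. g (u, t)" "of_rat q"] v q by simp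
          then show ?thesis using v by (simp add: N_def)
        qed
      qed
      ultimately show ?thesis by (rule AE_I')
    qed
  qed
  have "AE x in lborel \<Otimes>\<^sub>M lborel. Q x" by (rule lborel_pair.AE_pair_measure[OF Qm AEu])
  then have "AE x in lborel. Q x" unfolding lborel_prod[where 'a=real and 'b=real] .
  then show ?thesis
  proof (rule eventually_mono)
    fix x :: "real \<times> real" assume Qx: "Q x"
    show "x \<in> {0..1} \<times> {0..1} \<longrightarrow> (F (fst x) has_real_derivative g x) (at (snd x))"
    proof
      assume x: "x \<in> {0..1} \<times> {0..1}"
      then have u: "0 \<le> fst x" "fst x \<le> 1" by (auto simp: mem_Times_iff)
      from Qx x have v: "0 < snd x" "snd x < 1"
        and nq: "\<not> (\<exists>q::rat. \<forall>n::nat. g (fst x, snd x) < of_rat q \<and> of_rat q < g (fst x, snd x - snd x / real (n+2)))"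
        unfolding Q_def by (auto simp: mem_Times_iff)
      have "isCont (\<lambda>t. g (fst x, t)) (snd x)"
        using key_cont[of "\<lambda>t. g (fst x, t)", OF _ v] gp[OF u] nq by simp
      then have "(F (fst x) has_real_derivative g (fst x, snd x)) (at (snd x))"
        using SLOPE_DIFF[of "F (fst x)" "\<lambda>t. g (fst x, t)", OF _ v] gp[OF u] by simp
      then show "(F (fst x) has_real_derivative g x) (at (snd x))" by simp
    qed
  qed
qed

lemma nn2_fst:
  fixes R H :: "real \<times> real \<Rightarrow> real"
  assumes Hm: "H \<in> borel_measurable borel"
    and ae: "AE x in lborel. x \<in> {0..1} \<times> {0..1} \<longrightarrow> R x = H x"
  shows "(\<integral>\<^sup>+ x. indicator ({0..1} \<times> {0..1}) x * ennreal (\<bar>R x\<bar> powr 1) \<partial>lborel)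
       = (\<integral>\<^sup>+ u. \<integral>\<^sup>+ v. indicator ({0..1} \<times> {0..1}) (u, v) * ennreal \<bar>H (u, v)\<bar> \<partial>lborel \<partial>lborel)"
proof -
  have "(\<integral>\<^sup>+ x. indicator ({0..1} \<times> {0..1}) x * ennreal (\<bar>R x\<bar> powr 1) \<partial>lborel)
      = (\<integral>\<^sup>+ x. indicator ({0..1} \<times> {0..1}) x * ennreal \<bar>H x\<bar> \<partial>lborel)"
    by (rule nn_integral_cong_AE) (use ae in \<open>auto elim!: eventually_mono simp: indicator_def\<close>)
  also have "\<dots> = (\<integral>\<^sup>+ x. indicator ({0..1} \<times> {0..1}) x * ennreal \<bar>H x\<bar> \<partial>(lborel \<Otimes>\<^sub>M lborel))"
    unfolding lborel_prod[where 'a=real and 'b=real] ..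
  also have "\<dots> = (\<integral>\<^sup>+ u. \<integral>\<^sup>+ v. indicator ({0..1} \<times> {0..1}) (u, v) * ennreal \<bar>H (u, v)\<bar> \<partial>lborel \<partial>lborel)"
  proof (rule lborel.nn_integral_fst[symmetric])
    have [measurable]: "H \<in> borel_measurable (lborel \<Otimes>\<^sub>M lborel)"
      unfolding lborel_prod[where 'a=real and 'b=real] using Hm by simp
    have [measurable]: "{0..1::real} \<times> {0..1::real} \<in> sets (lborel \<Otimes>\<^sub>M lborel)"
      by (rule pair_measureI) auto
    show "(\<lambda>x::real\<times>real. indicator ({0..1} \<times> {0..1}) x * ennreal \<bar>H x\<bar>) \<in> borel_measurable (lborel \<Otimes>\<^sub>M lborel)"
      by measurable
  qed
  finally show ?thesis .
qed

lemma nn2_eq: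
  fixes P Q Hp Hq :: "real \<times> real \<Rightarrow> real"
  assumes "Hp \<in> borel_measurable borel" "Hq \<in> borel_measurable borel"
    and "AE x in lborel. x \<in> {0..1} \<times> {0..1} \<longrightarrow> P x = Hp x"
    and "AE x in lborel. x \<in> {0..1} \<times> {0..1} \<longrightarrow> Q x = Hq x"
    and eq: "\<And>u. 0 \<le> u \<Longrightarrow> u \<le> 1 \<Longrightarrow> (\<integral>\<^sup>+ v. indicator {0..1} v * ennreal \<bar>Hp (u, v)\<bar> \<partial>lborel)
                 = (\<integral>\<^sup>+ v. indicator {0..1} v * ennreal \<bar>Hq (u, v)\<bar> \<partial>lborel)"
  shows "(\<integral>\<^sup>+ x. indicator ({0..1} \<times> {0..1}) x * ennreal (\<bar>P x\<bar> powr 1) \<partial>lborel)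
       = (\<integral>\<^sup>+ x. indicator ({0..1} \<times> {0..1}) x * ennreal (\<bar>Q x\<bar> powr 1) \<partial>lborel)"
proof -
  have inner: "(\<integral>\<^sup>+ v. indicator ({0..1} \<times> {0..1}) (u, v) * ennreal \<bar>Hp (u, v)\<bar> \<partial>lborel)
      = (\<integral>\<^sup>+ v. indicator ({0..1} \<times> {0..1}) (u, v) * ennreal \<bar>Hq (u, v)\<bar> \<partial>lborel)" for u
  proof (cases "0 \<le> u \<and> u \<le> 1")
    case True
    then have e: "\<And>v. indicator ({0..1} \<times> {0..1}) (u, v) = (indicator {0..1} v :: ennreal)"
      by (auto simp: indicator_def)
    show ?thesis unfolding e using eq True by blast
  next
    case False
    then have e: "\<And>v. indicator ({0..1} \<times> {0..1}) (u, v) = (0 :: ennreal)"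
      by (auto simp: indicator_def)
    show ?thesis unfolding e by simp
  qed
  show ?thesis
    unfolding nn2_fst[OF assms(1,3)] nn2_fst[OF assms(2,4)] inner ..
qed

definition HDf :: "(real \<Rightarrow> real \<Rightarrow> real) \<Rightarrow> real \<times> real \<Rightarrow> real" where
  "HDf D x = rd (D (clamp (fst x))) (snd x)"
definition GDf :: "(real \<Rightarrow> real \<Rightarrow> real) \<Rightarrow> real \<times> real \<Rightarrow> real" where
  "GDf D x = gen_inv (rd (D (clamp (fst x)))) (snd x)"

lemma HDf_meas: "SI_copula D \<Longrightarrow> HDf D \<in> borel_measurable borel"
  unfolding HDf_def[abs_def] using HD_meas[of D] by (simp add: SI_copula_def)
lemma GDf_meas: "SI_copula D \<Longrightarrow> GDf D \<in> borel_measurable borel"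
  unfolding GDf_def[abs_def] using GD_meas[of D] by simp

lemma HDf_sec: "0 \<le> u \<Longrightarrow> u \<le> 1 \<Longrightarrow> (\<lambda>t. HDf D (u, t)) = rd (D u)"
  by (simp add: HDf_def)
lemma GDf_sec: "0 \<le> u \<Longrightarrow> u \<le> 1 \<Longrightarrow> (\<lambda>t. GDf D (u, t)) = GI D u"
  by (simp add: GDf_def GI_def)

lemma AE_D:
  assumes D: "SI_copula D"
  shows "AE x in lborel. x \<in> {0..1} \<times> {0..1} \<longrightarrow> (D (fst x) has_real_derivative HDf D x) (at (snd x))"
  by (rule AE_deriv[OF HDf_meas[OF D]]) (simp add: HDf_sec SI_facts[OF D])

lemma AE_S:
  assumes D: "SI_copula D"
  shows "AE x in lborel. x \<in> {0..1} \<times> {0..1} \<longrightarrow> (S_op D (fst x) has_real_derivative GDf D x) (at (snd x))"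
  by (rule AE_deriv[OF GDf_meas[OF D]]) (simp add: GDf_sec S_facts[OF D])

lemma ident_D:
  assumes D: "SI_copula D" and E: "SI_copula E" and u: "0 \<le> u" "u \<le> 1"
  shows "(\<integral>\<^sup>+ v. indicator {0..1} v * ennreal \<bar>GDf D (u, v) - GDf E (u, v)\<bar> \<partial>lborel)
       = (\<integral>\<^sup>+ v. indicator {0..1} v * ennreal \<bar>HDf D (u, v) - HDf E (u, v)\<bar> \<partial>lborel)"
proof -
  have CD: "copula D" "copula E" using D E by (auto simp: SI_copula_def)
  have "(\<integral>\<^sup>+ v. indicator {0..1} v * ennreal \<bar>rd (D u) v - rd (E u) v\<bar> \<partial>lborel)
      = (\<integral>\<^sup>+ v. indicator {0..1} v * ennreal \<bar>gen_inv (rd (D u)) v - gen_inv (rd (E u)) v\<bar> \<partial>lborel)"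
    by (rule ident[OF SI_facts(2)[OF D u] SI_facts(2)[OF E u] rd_meas1[OF CD(1) u] rd_meas1[OF CD(2) u]])
  then show ?thesis using u by (simp add: HDf_def GDf_def)
qed

lemma ident_0:
  assumes D: "SI_copula D" and u: "0 \<le> u" "u \<le> 1"
  shows "(\<integral>\<^sup>+ v. indicator {0..1} v * ennreal \<bar>GDf D (u, v)\<bar> \<partial>lborel)
       = (\<integral>\<^sup>+ v. indicator {0..1} v * ennreal \<bar>HDf D (u, v)\<bar> \<partial>lborel)"
proof -
  have CD: "copula D" using D by (auto simp: SI_copula_def)
  have "(\<integral>\<^sup>+ v. indicator {0..1} v * ennreal \<bar>rd (D u) v - 0\<bar> \<partial>lborel)
      = (\<integral>\<^sup>+ v. indicator {0..1} v * ennreal \<bar>gen_inv (rd (D u)) v - gen_inv (\<lambda>_. 0) v\<bar> \<partial>lborel)"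
    by (rule ident[OF SI_facts(2)[OF D u] DRC_zero rd_meas1[OF CD u]]) simp
  also have "\<dots> = (\<integral>\<^sup>+ v. indicator {0..1} v * ennreal \<bar>gen_inv (rd (D u)) v\<bar> \<partial>lborel)"
    by (rule nn_integral_cong) (auto simp: indicator_def gen_inv_zero)
  finally show ?thesis using u by (simp add: HDf_def GDf_def)
qed

lemma deriv_eqI: "(f has_real_derivative D) (at x) \<Longrightarrow> deriv f x = D"
  by (rule DERIV_imp_deriv)

theorem mainTheorem8:
  fixes D E :: "real \<Rightarrow> real \<Rightarrow> real"
  assumes "SI_copula D" and "SI_copula E"
  shows "(\<forall>v\<in>{0..1}. \<forall>u\<in>{0..1}. S_op (S_op D) v u = D v u)
       \<and> dist_d2 1 (S_op D) (S_op E) = dist_d2 1 D E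
       \<and> norm_d2 1 (S_op D) = norm_d2 1 D"
proof (intro conjI)
  note D = assms(1) and E = assms(2)
  show "\<forall>v\<in>{0..1}. \<forall>u\<in>{0..1}. S_op (S_op D) v u = D v u"
    using part_i[OF D] by auto
  have aeSD: "AE x in lborel. x \<in> {0..1} \<times> {0..1} \<longrightarrow> partial2 (S_op D) (fst x) (snd x) = GDf D x"
    using AE_S[OF D] by (rule eventually_mono) (auto simp: partial2_def intro: deriv_eqI)
  have aeD: "AE x in lborel. x \<in> {0..1} \<times> {0..1} \<longrightarrow> partial2 D (fst x) (snd x) = HDf D x"
    using AE_D[OF D] by (rule eventually_mono) (auto simp: partial2_def intro: deriv_eqI)
  show "norm_d2 1 (S_op D) = norm_d2 1 D"
  proof -
    have "(\<integral>\<^sup>+ x. indicator ({0..1} \<times> {0..1}) x * ennreal (\<bar>partial2 (S_op D) (fst x) (snd x)\<bar> powr 1) \<partial>lborel)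
        = (\<integral>\<^sup>+ x. indicator ({0..1} \<times> {0..1}) x * ennreal (\<bar>partial2 D (fst x) (snd x)\<bar> powr 1) \<partial>lborel)"
      by (rule nn2_eq[OF GDf_meas[OF D] HDf_meas[OF D] aeSD aeD ident_0[OF D]])
    then show ?thesis unfolding norm_d2_def by simp
  qed
  have aeSDE: "AE x in lborel. x \<in> {0..1} \<times> {0..1} \<longrightarrow>
      partial2 (\<lambda>u v. S_op D u v - S_op E u v) (fst x) (snd x) = GDf D x - GDf E x"
    using AE_S[OF D] AE_S[OF E]
  proof (rule eventually_elim2)
    fix x :: "real \<times> real"
    assume 1: "x \<in> {0..1} \<times> {0..1} \<longrightarrow> (S_op D (fst x) has_real_derivative GDf D x) (at (snd x))"
      and 2: "x \<in> {0..1} \<times> {0..1} \<longrightarrow> (S_op E (fst x) has_real_derivative GDf E x) (at (snd x))"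
    show "x \<in> {0..1} \<times> {0..1} \<longrightarrow> partial2 (\<lambda>u v. S_op D u v - S_op E u v) (fst x) (snd x) = GDf D x - GDf E x"
    proof
      assume x: "x \<in> {0..1} \<times> {0..1}"
      have "((\<lambda>s. S_op D (fst x) s - S_op E (fst x) s) has_real_derivative GDf D x - GDf E x) (at (snd x))"
        using 1 2 x by (intro DERIV_diff) auto
      then show "partial2 (\<lambda>u v. S_op D u v - S_op E u v) (fst x) (snd x) = GDf D x - GDf E x"
        unfolding partial2_def by (rule deriv_eqI)
    qed
  qed
  have aeDE: "AE x in lborel. x \<in> {0..1} \<times> {0..1} \<longrightarrow>
      partial2 (\<lambda>u v. D u v - E u v) (fst x) (snd x) = HDf D x - HDf E x"
    using AE_D[OF D] AE_D[OF E]
  proof (rule eventually_elim2)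
    fix x :: "real \<times> real"
    assume 1: "x \<in> {0..1} \<times> {0..1} \<longrightarrow> (D (fst x) has_real_derivative HDf D x) (at (snd x))"
      and 2: "x \<in> {0..1} \<times> {0..1} \<longrightarrow> (E (fst x) has_real_derivative HDf E x) (at (snd x))"
    show "x \<in> {0..1} \<times> {0..1} \<longrightarrow> partial2 (\<lambda>u v. D u v - E u v) (fst x) (snd x) = HDf D x - HDf E x"
    proof
      assume x: "x \<in> {0..1} \<times> {0..1}"
      have "((\<lambda>s. D (fst x) s - E (fst x) s) has_real_derivative HDf D x - HDf E x) (at (snd x))"
        using 1 2 x by (intro DERIV_diff) auto
      then show "partial2 (\<lambda>u v. D u v - E u v) (fst x) (snd x) = HDf D x - HDf E x"
        unfolding partial2_def by (rule deriv_eqI)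
    qed
  qed
  have mS: "(\<lambda>x. GDf D x - GDf E x) \<in> borel_measurable borel"
    using GDf_meas[OF D] GDf_meas[OF E] by (rule borel_measurable_diff)
  have mH: "(\<lambda>x. HDf D x - HDf E x) \<in> borel_measurable borel"
    using HDf_meas[OF D] HDf_meas[OF E] by (rule borel_measurable_diff)
  show "dist_d2 1 (S_op D) (S_op E) = dist_d2 1 D E"
  proof -
    have "(\<integral>\<^sup>+ x. indicator ({0..1} \<times> {0..1}) x * ennreal (\<bar>partial2 (\<lambda>u v. S_op D u v - S_op E u v) (fst x) (snd x)\<bar> powr 1) \<partial>lborel)
        = (\<integral>\<^sup>+ x. indicator ({0..1} \<times> {0..1}) x * ennreal (\<bar>partial2 (\<lambda>u v. D u v - E u v) (fst x) (snd x)\<bar> powr 1) \<partial>lborel)"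
      by (rule nn2_eq[OF mS mH aeSDE aeDE]) (simp add: ident_D[OF D E])
    then show ?thesis unfolding dist_d2_def norm_d2_def by simp
  qed
qed

end
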